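(* Let $n>0$ be an integer and $\alpha$ a dipath on $\vec{|\square[n]|}$ (whose underlying space is $\mathbb{I}^n$). For $x\in\mathbb{I}^n$ let $v(x)\in\{0,1\}^n$ be the vertex with coordinates $v(x)_i=1$ if $x_i=1$ and $v(x)_i=0$ otherwise (equivalently $v(x)=\mathrm{supp}(x)_*(0,\ldots,0)$). Then there is a dipath $\beta$ on $\vec{|\square[n]|}$ from $v(\alpha(0))$ to $v(\alpha(1))$ such that $U(\beta)$ is cellular (it maps $\{0,1\}$ to vertices and $[0,1]$ into the union of the edges of the cube). Moreover, if $\alpha(0)$ and $\alpha(1)$ lie in the boundary $\partial\mathbb{I}^n$ (points having some coordinate equal to $0$ or $1$) and $\alpha(\tfrac12)$ lies in the interior $(0,1)^n$, then $\beta$ is non-constant.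
   Context: Streams: a circulation on a space $X$ assigns to each open $V\subset X$ a preorder $\leqslant_V$ such that for every collection $\mathcal{O}$ of open sets, $\leqslant_{\bigcup\mathcal{O}}$ is the preorder with smallest graph containing $\bigcup_{V\in\mathcal{O}}\mathrm{graph}(\leqslant_V)$; a stream is a space with a circulation; a stream map $f:X\to Y$ is continuous with $f(x)\leqslant_V f(y)$ whenever $x\leqslant_{f^{-1}V}y$; $U$ is the forgetful functor to spaces. $\vec\square[1]$ is $[0,1]$ with circulation $x\leqslant_V y$ iff $x\le y$ and $[x,y]\subset V$; a dipath is a stream map from $\vec\square[1]$. $\square[n]=\square(-,[1]^n)$ is the representable precubical set, where $\square$ is the smallest subcategory of posets and monotone maps closed under cartesian products containing $\delta_\pm:\{0\}\to\{0<1\}$. Its stream realization $\vec{|\square[n]|}$ is the stream $\vec\square[n]$, the $n$-fold product of $\vec\square[1]$ in streams, with underlying space $\mathbb{I}^n$ (CW structure: the standard cubical cells) and $\leqslant_{\mathbb{I}^n}$ the coordinatewise order. $[0,1]$ has CW structure with vertices $0,1$. *)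

theory Defs
  imports "HOL-Analysis.Analysis"
begin

text \<open>A circulation on a space X: to each open V a preorder on V (given as a relation
C V, which is empty for non-open V); for every family O of open sets, the relation on
the union is the smallest preorder on the union containing all the relations C V, V in O.\<close>
definition circulation :: "'a topology \<Rightarrow> ('a set \<Rightarrow> 'a \<Rightarrow> 'a \<Rightarrow> bool) \<Rightarrow> bool" where
  "circulation X C \<longleftrightarrow>
     (\<forall>V x y. C V x y \<longrightarrow> openin X V \<and> x \<in> V \<and> y \<in> V) \<and>
     (\<forall>\<O>. (\<forall>V\<in>\<O>. openin X V) \<longrightarrow>
        {(x, y). C (\<Union>\<O>) x y} = (Id_on (\<Union>\<O>) \<union> (\<Union>V\<in>\<O>. {(x, y). C V x y}))\<^sup>+)"

definition stream_map ::
  "'a topology \<Rightarrow> ('a set \<Rightarrow> 'a \<Rightarrow> 'a \<Rightarrow> bool) \<Rightarrow> 'b topology \<Rightarrow> ('b set \<Rightarrow> 'b \<Rightarrow> 'b \<Rightarrow> bool)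
     \<Rightarrow> ('a \<Rightarrow> 'b) \<Rightarrow> bool" where
  "stream_map X CX Y CY f \<longleftrightarrow> continuous_map X Y f \<and>
     (\<forall>V x y. openin Y V \<longrightarrow> CX (f -` V \<inter> topspace X) x y \<longrightarrow> CY V (f x) (f y))"

definition dint_top :: "real topology" where
  "dint_top = top_of_set {0..1}"

definition dint_circ :: "real set \<Rightarrow> real \<Rightarrow> real \<Rightarrow> bool" where
  "dint_circ V x y \<longleftrightarrow> openin dint_top V \<and> x \<le> y \<and> {x..y} \<subseteq> V"

text \<open>The n-cube, n = CARD('n), points in real^'n.\<close>
definition unit_cube :: "(real^'n) set" where
  "unit_cube = {x. \<forall>i. 0 \<le> x$i \<and> x$i \<le> 1}"

definition cube_top :: "(real^'n) topology" where
  "cube_top = top_of_set unit_cube"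

definition product_circ :: "((real^'n) set \<Rightarrow> real^'n \<Rightarrow> real^'n \<Rightarrow> bool) \<Rightarrow> bool" where
  "product_circ C \<longleftrightarrow> circulation cube_top C \<and>
     (\<forall>i. stream_map cube_top C dint_top dint_circ (\<lambda>x. x$i))"

text \<open>The product circulation of n copies of the directed interval (categorical product in
streams): the greatest circulation on the product space for which the projections are
stream maps.\<close>
definition cube_circ :: "(real^'n) set \<Rightarrow> real^'n \<Rightarrow> real^'n \<Rightarrow> bool" where
  "cube_circ = (THE C. product_circ C \<and>
      (\<forall>C'. product_circ C' \<longrightarrow> (\<forall>V x y. C' V x y \<longrightarrow> C V x y)))"

definition dipath :: "(real \<Rightarrow> real^'n) \<Rightarrow> bool" where
  "dipath \<beta> \<longleftrightarrow> stream_map dint_top dint_circ cube_top cube_circ \<beta>"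

definition vtx :: "real^'n \<Rightarrow> real^'n" where
  "vtx x = (\<chi> i. if x$i = 1 then 1 else 0)"

definition cube_vertices :: "(real^'n) set" where
  "cube_vertices = {x. \<forall>i. x$i = 0 \<or> x$i = 1}"

text \<open>Union of the (closed) edges of the cube: the 1-skeleton.\<close>
definition cube_skel1 :: "(real^'n) set" where
  "cube_skel1 = {x \<in> unit_cube. card {i. x$i \<noteq> 0 \<and> x$i \<noteq> 1} \<le> 1}"

definition cellular_path :: "(real \<Rightarrow> real^'n) \<Rightarrow> bool" where
  "cellular_path \<beta> \<longleftrightarrow> \<beta> ` {0, 1} \<subseteq> cube_vertices \<and> \<beta> ` {0..1} \<subseteq> cube_skel1"

definition cube_boundary :: "(real^'n) set" where
  "cube_boundary = {x \<in> unit_cube. \<exists>i. x$i = 0 \<or> x$i = 1}"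

definition cube_interior :: "(real^'n) set" where
  "cube_interior = {x. \<forall>i. 0 < x$i \<and> x$i < 1}"

end

theory Submission
  imports Defs
begin


definition segrel :: "(real^'n) set \<Rightarrow> ((real^'n) \<times> (real^'n)) set" where
  "segrel V = {(a,b). (\<forall>i. a$i \<le> b$i) \<and> closed_segment a b \<subseteq> V}"

definition CS :: "(real^'n) set \<Rightarrow> real^'n \<Rightarrow> real^'n \<Rightarrow> bool" where
  "CS V x y \<longleftrightarrow> openin cube_top V \<and> x \<in> V \<and> (x,y) \<in> (segrel V)\<^sup>*"

lemma rtr_le: "(x,y) \<in> (segrel V)\<^sup>* \<Longrightarrow> x$i \<le> y$i"
  by (induction rule: rtrancl_induct) (auto simp: segrel_def intro: order_trans)

lemma rtr_mem: "(x,y) \<in> (segrel V)\<^sup>* \<Longrightarrow> x \<in> V \<Longrightarrow> y \<in> V"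
  by (induction rule: rtrancl_induct) (auto simp: segrel_def)

lemma rtr_mono: "V \<subseteq> W \<Longrightarrow> (x,y) \<in> (segrel V)\<^sup>* \<Longrightarrow> (x,y) \<in> (segrel W)\<^sup>*"
proof -
  assume "V \<subseteq> W"
  then have "segrel V \<subseteq> segrel W" by (auto simp: segrel_def)
  then show "(x,y) \<in> (segrel V)\<^sup>* \<Longrightarrow> (x,y) \<in> (segrel W)\<^sup>*" using rtrancl_mono by blast
qed

lemma topspace_cube: "topspace cube_top = unit_cube"
  by (simp add: cube_top_def)

lemma convex_cube: "convex unit_cube"
proof (rule convexI)
  fix x y :: "real^'n" and u v :: real
  assume h0: "x \<in> unit_cube" "y \<in> unit_cube" and h: "0 \<le> u" "0 \<le> v" "u + v = 1"
  show "u *\<^sub>R x + v *\<^sub>R y \<in> unit_cube" unfolding unit_cube_def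
  proof (clarify)
    fix i
    have hx: "0 \<le> x$i" "x$i \<le> 1" "0 \<le> y$i" "y$i \<le> 1" using h0 by (auto simp: unit_cube_def)
    have a: "0 \<le> u * x$i" "0 \<le> v * y$i" using h hx by auto
    have b: "u * x$i \<le> u" "v * y$i \<le> v" using h hx by (auto simp: mult_left_le)
    show "0 \<le> (u *\<^sub>R x + v *\<^sub>R y) $ i \<and> (u *\<^sub>R x + v *\<^sub>R y) $ i \<le> 1" using a b h by simp
  qed
qed

lemma seg_dist: "(x::real^'n) \<in> closed_segment p q \<Longrightarrow> y \<in> closed_segment p q \<Longrightarrow> dist x y \<le> dist p q"
proof -
  assume a: "x \<in> closed_segment p q" and b: "y \<in> closed_segment p q"
  have "dist x y \<le> dist x p \<or> dist x y \<le> dist x q"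
    using dist_decreases_closed_segment[OF b, of x] by (simp add: dist_commute)
  moreover have "dist x p \<le> dist p q \<and> dist x q \<le> dist p q" using dist_in_closed_segment[OF a] .
  ultimately show ?thesis by linarith
qed

lemma split_seg:
  assumes O: "\<forall>V\<in>\<O>. openin cube_top V" and yz: "(y,z) \<in> segrel (\<Union>\<O>)"
  shows "(y,z) \<in> (\<Union>V\<in>\<O>. {(x,y). CS V x y})\<^sup>*"
proof -
  let ?R = "(\<Union>V\<in>\<O>. {(x,y). CS V x y})"
  define K where "K = closed_segment y z"
  have Ksub: "K \<subseteq> \<Union>\<O>" and yzle: "\<forall>i. y$i \<le> z$i" using yz by (auto simp: segrel_def K_def)
  have "\<forall>V\<in>\<O>. \<exists>T. open T \<and> V = unit_cube \<inter> T" using O by (simp add: cube_top_def openin_open)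
  then obtain f where f: "\<And>V. V\<in>\<O> \<Longrightarrow> open (f V) \<and> V = unit_cube \<inter> f V" by metis
  have Ocube: "\<Union>\<O> \<subseteq> unit_cube" using f by blast
  have ne: "f ` \<O> \<noteq> {}" using Ksub by (auto simp: K_def)
  have Kcov: "K \<subseteq> \<Union>(f ` \<O>)" using Ksub f by blast
  obtain \<delta> where dpos: "0 < \<delta>" and dprop: "\<And>T. T \<subseteq> K \<Longrightarrow> diameter T < \<delta> \<Longrightarrow> \<exists>B\<in>f ` \<O>. T \<subseteq> B"
    using Lebesgue_number_lemma[OF _ ne Kcov] f by (metis K_def compact_segment imageE)
  define m :: nat where "m = nat (ceiling (norm (z - y) / \<delta>)) + 1"
  have mpos: "m > 0" by (simp add: m_def)
  have "norm (z - y) / \<delta> \<le> real (nat (ceiling (norm (z - y) / \<delta>)))"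
    by (metis of_nat_nat real_nat_ceiling_ge)
  then have "norm (z - y) / \<delta> < real m" by (simp add: m_def)
  then have nm: "norm (z - y) / real m < \<delta>" using dpos mpos
    by (simp add: divide_less_eq mult.commute)
  define p where "p k = y + (real k / real m) *\<^sub>R (z - y)" for k :: nat
  have pK: "p k \<in> K" if "k \<le> m" for k
  proof -
    have u: "0 \<le> real k / real m" "real k / real m \<le> 1" using that mpos by auto
    have "p k = (1 - real k / real m) *\<^sub>R y + (real k / real m) *\<^sub>R z"
      by (simp add: p_def algebra_simps)
    then show ?thesis using u unfolding K_def in_segment by blast
  qed
  have step: "(p k, p (Suc k)) \<in> ?R" if "k < m" for k
  proof -
    let ?T = "closed_segment (p k) (p (Suc k))"
    have TK: "?T \<subseteq> K" using pK that unfolding K_def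
      by (simp add: subset_closed_segment)
    have dpp: "dist (p k) (p (Suc k)) = norm (z - y) / real m"
    proof -
      have "p (Suc k) - p k = (1 / real m) *\<^sub>R (z - y)" by (simp add: p_def algebra_simps add_divide_distrib)
      then show ?thesis using mpos by (simp add: dist_norm norm_minus_commute[of "p k"] divide_inverse)
    qed
    have "diameter ?T \<le> dist (p k) (p (Suc k))"
      by (rule diameter_le) (auto simp: seg_dist dist_norm[symmetric])
    then have "diameter ?T < \<delta>" using dpp nm by linarith
    then obtain V where V: "V \<in> \<O>" "?T \<subseteq> f V" using dprop[OF TK] by blast
    have "?T \<subseteq> unit_cube" using TK Ksub Ocube by blast
    then have TV: "?T \<subseteq> V" using V f by blast
    have le: "\<forall>i. p k $ i \<le> p (Suc k) $ i"
    proof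
      fix i
      have "real k / real m * (z$i - y$i) \<le> real (Suc k) / real m * (z$i - y$i)"
        using yzle mpos by (intro mult_right_mono) (auto simp: divide_right_mono)
      moreover have "p j $ i = y$i + real j / real m * (z$i - y$i)" for j by (simp add: p_def)
      ultimately show "p k $ i \<le> p (Suc k) $ i" by simp
    qed
    have "CS V (p k) (p (Suc k))"
      unfolding CS_def using O V TV le by (auto simp: segrel_def)
    then show ?thesis using V by blast
  qed
  have "(p 0, p k) \<in> ?R\<^sup>*" if "k \<le> m" for k
    using that
  proof (induction k)
    case 0 then show ?case by simp
  next
    case (Suc k)
    then show ?case using step[of k] by (meson Suc_leD Suc_le_lessD rtrancl.simps)
  qed
  moreover have "p 0 = y" "p m = z" using mpos by (auto simp: p_def)
  ultimately show ?thesis by auto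
qed



lemma CS_circ: "circulation cube_top CS"
  unfolding circulation_def
proof (rule conjI)
  show "\<forall>V x y. CS V x y \<longrightarrow> openin cube_top V \<and> x \<in> V \<and> y \<in> V" using rtr_mem by (auto simp: CS_def)
next
  show "\<forall>\<O>. (\<forall>V\<in>\<O>. openin cube_top V) \<longrightarrow>
        {(x, y). CS (\<Union>\<O>) x y} = (Id_on (\<Union>\<O>) \<union> (\<Union>V\<in>\<O>. {(x, y). CS V x y}))\<^sup>+"
  proof (intro allI impI)
  fix \<O> :: "(real^'n) set set" assume O: "\<forall>V\<in>\<O>. openin cube_top V"
  let ?R = "Id_on (\<Union>\<O>) \<union> (\<Union>V\<in>\<O>. {(x, y). CS V x y})"
  have openU: "openin cube_top (\<Union>\<O>)" using O by auto
  show "{(x, y). CS (\<Union>\<O>) x y} = ?R\<^sup>+"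
  proof
    show "{(x, y). CS (\<Union>\<O>) x y} \<subseteq> ?R\<^sup>+"
    proof clarify
      fix x y assume "CS (\<Union>\<O>) x y"
      then have x: "x \<in> \<Union>\<O>" and xy: "(x,y) \<in> (segrel (\<Union>\<O>))\<^sup>*" by (auto simp: CS_def)
      from xy show "(x,y) \<in> ?R\<^sup>+"
      proof (induction rule: rtrancl_induct)
        case base then show ?case using x by auto
      next
        case (step y z)
        have "(y,z) \<in> (\<Union>V\<in>\<O>. {(x, y). CS V x y})\<^sup>*" using split_seg[OF O step(2)] .
        moreover have "(\<Union>V\<in>\<O>. {(x, y). CS V x y})\<^sup>* \<subseteq> ?R\<^sup>*" by (rule rtrancl_mono) blast
        ultimately have "(y,z) \<in> ?R\<^sup>*" by blast
        then show ?case using step(3) by auto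
      qed
    qed
  next
    have base: "?R \<subseteq> {(x, y). CS (\<Union>\<O>) x y}"
    proof clarify
      fix a b assume "(a,b) \<in> ?R"
      then show "CS (\<Union>\<O>) a b"
      proof
        assume "(a,b) \<in> Id_on (\<Union>\<O>)" then show ?thesis using openU by (auto simp: CS_def)
      next
        assume "(a,b) \<in> (\<Union>V\<in>\<O>. {(x, y). CS V x y})"
        then obtain V where V: "V \<in> \<O>" "CS V a b" by blast
        then show ?thesis using openU rtr_mono[of V "\<Union>\<O>" a b] by (auto simp: CS_def)
      qed
    qed
    have tr: "trans {(x, y). CS (\<Union>\<O>) x y}"
      by (rule transI) (auto simp: CS_def)
    show "?R\<^sup>+ \<subseteq> {(x, y). CS (\<Union>\<O>) x y}"
    proof clarify
      fix a b assume "(a,b) \<in> ?R\<^sup>+"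
      then have "(a,b) \<in> {(x, y). CS (\<Union>\<O>) x y}\<^sup>+" using trancl_mono base by blast
      then show "CS (\<Union>\<O>) a b" using trancl_id[OF tr] by simp
    qed
  qed
  qed
qed

lemma CS_proj: "stream_map cube_top CS dint_top dint_circ (\<lambda>x. x$i)"
  unfolding stream_map_def
proof (intro conjI allI impI)
  show "continuous_map cube_top dint_top (\<lambda>x. x $ i)"
    unfolding cube_top_def dint_top_def continuous_map_subtopology_eu
    by (auto simp: unit_cube_def intro: continuous_intros)
next
  fix U x y
  assume U: "openin dint_top U" and c: "CS ((\<lambda>x. x $ i) -` U \<inter> topspace cube_top) x y"
  let ?W = "(\<lambda>x. x $ i) -` U \<inter> topspace cube_top"
  have x: "x \<in> ?W" and xy: "(x,y) \<in> (segrel ?W)\<^sup>*" using c by (auto simp: CS_def)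
  have "x$i \<le> y$i \<and> {x$i..y$i} \<subseteq> U" using xy
  proof (induction rule: rtrancl_induct)
    case base then show ?case using x by auto
  next
    case (step z w)
    have zw: "z$i \<le> w$i" and seg: "closed_segment z w \<subseteq> ?W" using step(2) by (auto simp: segrel_def)
    have "{z$i..w$i} \<subseteq> U"
    proof
      fix t assume t: "t \<in> {z$i..w$i}"
      show "t \<in> U"
      proof (cases "z$i = w$i")
        case True
        then have "t = z$i" using t by auto
        moreover have "z \<in> ?W" using seg by auto
        ultimately show ?thesis by auto
      next
        case False
        then have lt: "z$i < w$i" using zw by auto
        define u where "u = (t - z$i) / (w$i - z$i)"
        have u: "0 \<le> u" "u \<le> 1" using t lt by (auto simp: u_def divide_le_eq_1)
        have "(1 - u) *\<^sub>R z + u *\<^sub>R w \<in> closed_segment z w" using u unfolding in_segment by blast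
        then have "(1 - u) *\<^sub>R z + u *\<^sub>R w \<in> ?W" using seg by blast
        moreover have "((1 - u) *\<^sub>R z + u *\<^sub>R w) $ i = t"
        proof -
          have "((1 - u) *\<^sub>R z + u *\<^sub>R w) $ i = z$i + u * (w$i - z$i)" by (simp add: algebra_simps)
          also have "u * (w$i - z$i) = t - z$i" using lt by (simp add: u_def)
          finally show ?thesis by simp
        qed
        ultimately show ?thesis by auto
      qed
    qed
    then show ?case using step(3) zw
      by (auto simp: subset_iff) (meson linorder_le_cases order_trans)
  qed
  then show "dint_circ U (x $ i) (y $ i)" using U by (simp add: dint_circ_def)
qed

lemma CS_product: "product_circ CS"
  unfolding product_circ_def using CS_circ CS_proj by blast

lemma circ_first: "circulation X C \<Longrightarrow> C V x y \<Longrightarrow> openin X V \<and> x \<in> V \<and> y \<in> V"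
  unfolding circulation_def by blast

lemma circ_union: "circulation X C \<Longrightarrow> (\<forall>V\<in>\<O>. openin X V) \<Longrightarrow>
   {(x, y). C (\<Union>\<O>) x y} = (Id_on (\<Union>\<O>) \<union> (\<Union>V\<in>\<O>. {(x, y). C V x y}))\<^sup>+"
  unfolding circulation_def by blast

lemma product_le:
  assumes P: "product_circ C" and c: "C W a b"
  shows "a$i \<le> b$i"
proof -
  have circ: "circulation cube_top C" and pr: "stream_map cube_top C dint_top dint_circ (\<lambda>x. x$i)"
    using P by (auto simp: product_circ_def)
  have W: "openin cube_top W" "a \<in> W" "b \<in> W" using circ_first[OF circ c] by auto
  have Wc: "W \<subseteq> unit_cube" using openin_subset[OF W(1)] by (simp add: topspace_cube)
  have oc: "openin cube_top unit_cube" using openin_topspace[of cube_top] by (simp add: topspace_cube)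
  have e1: "{(x, y). C (\<Union>{W, unit_cube}) x y} = (Id_on (\<Union>{W, unit_cube}) \<union> (\<Union>V\<in>{W, unit_cube}. {(x, y). C V x y}))\<^sup>+"
  proof -
    have "\<forall>V\<in>{W, unit_cube}. openin cube_top V" using W(1) oc by blast
    then show ?thesis using circ_union[OF circ] by blast
  qed
  have e2: "\<Union>{W, unit_cube} = unit_cube" using Wc by auto
  have "{(x, y). C unit_cube x y} = (Id_on unit_cube \<union> (\<Union>V\<in>{W, unit_cube}. {(x, y). C V x y}))\<^sup>+"
    using e1 unfolding e2 .
  moreover have "(a,b) \<in> (Id_on unit_cube \<union> (\<Union>V\<in>{W, unit_cube}. {(x, y). C V x y}))\<^sup>+"
    using c by blast
  ultimately have "C unit_cube a b" by blast
  moreover have e3: "(\<lambda>x. x$i) -` {0..1} \<inter> topspace cube_top = unit_cube"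
    by (auto simp: topspace_cube unit_cube_def)
  moreover have "openin dint_top {0..1}" by (simp add: dint_top_def)
  moreover have all: "\<forall>V x y. openin dint_top V \<longrightarrow> C ((\<lambda>x. x$i) -` V \<inter> topspace cube_top) x y \<longrightarrow> dint_circ V (x$i) (y$i)"
    using pr unfolding stream_map_def by blast
  ultimately have "dint_circ {0..1} (a$i) (b$i)"
    by (metis (no_types, lifting))
  then show ?thesis by (simp add: dint_circ_def)
qed

lemma product_greatest:
  assumes P: "product_circ C" and c: "C V x y"
  shows "CS V x y"
proof -
  have circ: "circulation cube_top C" using P by (auto simp: product_circ_def)
  have V: "openin cube_top V" "x \<in> V" using circ_first[OF circ c] by auto
  define \<O> where "\<O> = {ball p r \<inter> unit_cube | p r. ball p r \<inter> unit_cube \<subseteq> V}"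
  have Oopen: "\<forall>W\<in>\<O>. openin cube_top W"
  proof
    fix W assume "W \<in> \<O>"
    then obtain p r where "W = ball p r \<inter> unit_cube" by (auto simp: \<O>_def)
    then show "openin cube_top W" unfolding cube_top_def openin_open
      by (intro exI[of _ "ball p r"]) auto
  qed
  have UO: "\<Union>\<O> = V"
  proof
    show "\<Union>\<O> \<subseteq> V" by (auto simp: \<O>_def)
    show "V \<subseteq> \<Union>\<O>"
    proof
      fix z assume z: "z \<in> V"
      then obtain e where e: "e > 0" "ball z e \<inter> unit_cube \<subseteq> V"
        using V(1) unfolding cube_top_def openin_contains_ball by blast
      have "z \<in> unit_cube" using openin_subset[OF V(1)] z topspace_cube by auto
      then have zb: "z \<in> ball z e \<inter> unit_cube" using e(1) by auto
      have "ball z e \<inter> unit_cube \<in> \<O>" unfolding \<O>_def using e(2) by blast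
      then show "z \<in> \<Union>\<O>" using zb by blast
    qed
  qed
  have "{(x, y). C (\<Union>\<O>) x y} = (Id_on (\<Union>\<O>) \<union> (\<Union>W\<in>\<O>. {(x, y). C W x y}))\<^sup>+"
    using circ_union[OF circ Oopen] .
  then have eq: "{(x, y). C V x y} = (Id_on V \<union> (\<Union>W\<in>\<O>. {(x, y). C W x y}))\<^sup>+" unfolding UO .
  have base: "Id_on V \<union> (\<Union>W\<in>\<O>. {(x, y). C W x y}) \<subseteq> (segrel V)\<^sup>*"
  proof clarify
    fix a b assume "(a,b) \<in> Id_on V \<union> (\<Union>W\<in>\<O>. {(x, y). C W x y})"
    then show "(a,b) \<in> (segrel V)\<^sup>*"
    proof
      assume "(a,b) \<in> Id_on V" then show ?thesis by auto
    next
      assume "(a,b) \<in> (\<Union>W\<in>\<O>. {(x, y). C W x y})"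
      then obtain W where W: "W \<in> \<O>" "C W a b" by blast
      then obtain p r where Wd: "W = ball p r \<inter> unit_cube" "W \<subseteq> V" by (auto simp: \<O>_def)
      have ab: "a \<in> W" "b \<in> W" using circ_first[OF circ W(2)] by auto
      have "convex W" using Wd(1) convex_Int[OF convex_ball convex_cube] by simp
      then have "closed_segment a b \<subseteq> V" using closed_segment_subset[OF ab \<open>convex W\<close>] Wd by blast
      moreover have "\<forall>i. a$i \<le> b$i" using product_le[OF P W(2)] by blast
      ultimately show ?thesis by (auto simp: segrel_def)
    qed
  qed
  have "(x,y) \<in> (Id_on V \<union> (\<Union>W\<in>\<O>. {(x, y). C W x y}))\<^sup>+" using eq c by blast
  then have "(x,y) \<in> ((segrel V)\<^sup>*)\<^sup>+" using trancl_mono base by blast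
  then have "(x,y) \<in> (segrel V)\<^sup>*" by simp
  then show ?thesis using V by (simp add: CS_def)
qed

lemma cube_circ_eq: "cube_circ = CS"
  unfolding cube_circ_def
proof (rule the_equality)
  show "product_circ CS \<and> (\<forall>C'. product_circ C' \<longrightarrow> (\<forall>V x y. C' V x y \<longrightarrow> CS V x y))"
    using CS_product product_greatest by blast
next
  fix C assume h: "product_circ C \<and> (\<forall>C'. product_circ C' \<longrightarrow> (\<forall>V x y. C' V x y \<longrightarrow> C V x y))"
  show "C = CS"
  proof (intro ext iffI)
    fix V x y
    show "C V x y \<Longrightarrow> CS V x y" using h product_greatest by blast
    show "CS V x y \<Longrightarrow> C V x y" using h CS_product by blast
  qed
qed



definition clamp :: "real \<Rightarrow> real" where "clamp u = max 0 (min 1 u)"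

definition bpath :: "('n \<Rightarrow> nat) \<Rightarrow> real^'n \<Rightarrow> real^'n \<Rightarrow> real \<Rightarrow> real^'n" where
  "bpath e v0 v1 t = (\<chi> i. v0$i + (v1$i - v0$i) * clamp (real CARD('n) * t - real (e i)))"

lemma bpath_nth: fixes e :: "'n::finite \<Rightarrow> nat" shows "bpath e v0 v1 t $ i = v0$i + (v1$i - v0$i) * clamp (real CARD('n) * t - real (e i))"
  by (simp add: bpath_def)

lemma clamp_mono: "u \<le> w \<Longrightarrow> clamp u \<le> clamp w"
  by (simp add: clamp_def)

lemma clamp_range: "0 \<le> clamp u" "clamp u \<le> 1"
  by (auto simp: clamp_def)

locale bsetup =
  fixes e :: "'n::finite \<Rightarrow> nat" and v0 v1 :: "real^'n"
  assumes inj: "inj e" and rng: "\<And>i. e i < CARD('n)"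
    and v0: "v0 \<in> cube_vertices" and v1: "v1 \<in> cube_vertices" and le: "\<And>i. v0$i \<le> v1$i"
begin

abbreviation "\<beta> \<equiv> bpath e v0 v1"

lemma Npos: "real CARD('n) > 0" by simp

lemma d01: "(v0$i = 0 \<and> v1$i = 0) \<or> (v0$i = 1 \<and> v1$i = 1) \<or> (v0$i = 0 \<and> v1$i = 1)"
proof -
  have "v0$i = 0 \<or> v0$i = 1" "v1$i = 0 \<or> v1$i = 1" using v0 v1 by (auto simp: cube_vertices_def)
  then show ?thesis using le[of i] by auto
qed

lemma beta0: "\<beta> 0 = v0"
  by (simp add: vec_eq_iff bpath_nth clamp_def)

lemma beta1: "\<beta> 1 = v1"
proof -
  have "clamp (real CARD('n) - real (e i)) = 1" for i
  proof -
    have "real (e i) + 1 \<le> real CARD('n)" using rng[of i] by linarith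
    then show ?thesis by (simp add: clamp_def)
  qed
  then show ?thesis by (simp add: vec_eq_iff bpath_nth)
qed

lemma beta_cont: "continuous_on S \<beta>"
  unfolding bpath_def clamp_def
  by (intro continuous_on_vec_lambda continuous_intros)

lemma beta_mono: "s \<le> t \<Longrightarrow> \<beta> s $ i \<le> \<beta> t $ i"
proof -
  assume "s \<le> t"
  then have "clamp (real CARD('n) * s - real (e i)) \<le> clamp (real CARD('n) * t - real (e i))"
    by (intro clamp_mono) (simp add: mult_left_mono)
  moreover have "0 \<le> v1$i - v0$i" using le[of i] by simp
  ultimately show ?thesis by (simp add: bpath_nth mult_left_mono)
qed

lemma beta_cube: "\<beta> t \<in> unit_cube"
  unfolding unit_cube_def
proof (clarify)
  fix i
  show "0 \<le> \<beta> t $ i \<and> \<beta> t $ i \<le> 1"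
    using d01[of i] clamp_range[of "real CARD('n) * t - real (e i)"] by (auto simp: bpath_nth)
qed

lemma beta_skel: "\<beta> t \<in> cube_skel1"
proof -
  let ?S = "{i. \<beta> t $ i \<noteq> 0 \<and> \<beta> t $ i \<noteq> 1}"
  have mem: "0 < real CARD('n) * t - real (e i) \<and> real CARD('n) * t - real (e i) < 1" if "i \<in> ?S" for i
  proof -
    have "v0$i = 0 \<and> v1$i = 1" using d01[of i] that by (auto simp: bpath_nth)
    then have "clamp (real CARD('n) * t - real (e i)) \<noteq> 0" "clamp (real CARD('n) * t - real (e i)) \<noteq> 1"
      using that by (auto simp: bpath_nth)
    then show ?thesis by (auto simp: clamp_def split: if_splits)
  qed
  have "\<forall>i\<in>?S. \<forall>j\<in>?S. i = j"
  proof (intro ballI)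
    fix i j assume i: "i \<in> ?S" and j: "j \<in> ?S"
    have "real (e i) < real (e j) + 1" "real (e j) < real (e i) + 1" using mem[OF i] mem[OF j] by linarith+
    then have "e i = e j" by linarith
    then show "i = j" using inj by (simp add: inj_eq)
  qed
  then have "card ?S \<le> 1" using card_le_Suc0_iff_eq[of ?S] by simp
  then show ?thesis using beta_cube by (simp add: cube_skel1_def)
qed

lemma piece_affine:
  fixes k :: nat
  shows "\<exists>A B. \<forall>u. real k / real CARD('n) \<le> u \<and> u \<le> real (Suc k) / real CARD('n) \<longrightarrow> \<beta> u $ i = A + B * u"
proof -
  have cl: "\<exists>c g. \<forall>u. real k / real CARD('n) \<le> u \<and> u \<le> real (Suc k) / real CARD('n) \<longrightarrow>
      clamp (real CARD('n) * u - real (e i)) = c + g * u"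
  proof (cases "e i < k")
    case True
    show ?thesis
    proof (intro exI allI impI)
      fix u assume u: "real k / real CARD('n) \<le> u \<and> u \<le> real (Suc k) / real CARD('n)"
      then have "real k \<le> real CARD('n) * u" using Npos by (simp add: divide_le_eq mult.commute)
      moreover have "real (e i) + 1 \<le> real k" using True by linarith
      ultimately show "clamp (real CARD('n) * u - real (e i)) = 1 + 0 * u" by (simp add: clamp_def)
    qed
  next
    case False
    show ?thesis
    proof (cases "e i = k")
      case True
      show ?thesis
      proof (intro exI allI impI)
        fix u assume u: "real k / real CARD('n) \<le> u \<and> u \<le> real (Suc k) / real CARD('n)"
        then have "real k \<le> real CARD('n) * u" "real CARD('n) * u \<le> real k + 1" using Npos
          by (simp_all add: divide_le_eq le_divide_eq mult.commute)
        then show "clamp (real CARD('n) * u - real (e i)) = (- real k) + real CARD('n) * u" using True by (simp add: clamp_def)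
      qed
    next
      case False
      then have "real k + 1 \<le> real (e i)" using \<open>\<not> e i < k\<close> by linarith
      show ?thesis
      proof (intro exI allI impI)
        fix u assume u: "real k / real CARD('n) \<le> u \<and> u \<le> real (Suc k) / real CARD('n)"
        then have "real CARD('n) * u \<le> real k + 1" using Npos
          by (simp add: le_divide_eq mult.commute)
        then show "clamp (real CARD('n) * u - real (e i)) = 0 + 0 * u" using \<open>real k + 1 \<le> real (e i)\<close>
          by (simp add: clamp_def)
      qed
    qed
  qed
  then obtain c g where cg: "\<And>u. real k / real CARD('n) \<le> u \<and> u \<le> real (Suc k) / real CARD('n) \<Longrightarrow>
      clamp (real CARD('n) * u - real (e i)) = c + g * u" by blast
  show ?thesis
  proof (intro exI allI impI)
    fix u assume h: "real k / real CARD('n) \<le> u \<and> u \<le> real (Suc k) / real CARD('n)"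
    have "\<beta> u $ i = v0$i + (v1$i - v0$i) * clamp (real CARD('n) * u - real (e i))" by (rule bpath_nth)
    also have "\<dots> = v0$i + (v1$i - v0$i) * (c + g * u)" using cg[OF h] by simp
    finally show "\<beta> u $ i = (v0$i + (v1$i - v0$i) * c) + ((v1$i - v0$i) * g) * u" by (simp add: algebra_simps)
  qed
qed

lemma piece_seg:
  fixes k :: nat
  assumes ab: "real k / real CARD('n) \<le> a" "a \<le> b" "b \<le> real (Suc k) / real CARD('n)"
  shows "closed_segment (\<beta> a) (\<beta> b) \<subseteq> \<beta> ` {a..b}"
proof
  fix p assume "p \<in> closed_segment (\<beta> a) (\<beta> b)"
  then obtain \<theta> where th: "0 \<le> \<theta>" "\<theta> \<le> 1" "p = (1 - \<theta>) *\<^sub>R \<beta> a + \<theta> *\<^sub>R \<beta> b"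
    unfolding in_segment by blast
  define u where "u = (1 - \<theta>) * a + \<theta> * b"
  have ua: "a \<le> u"
  proof -
    have "\<theta> * a \<le> \<theta> * b" using th ab by (simp add: mult_left_mono)
    then show ?thesis by (simp add: u_def algebra_simps)
  qed
  have ub: "u \<le> b"
  proof -
    have "(1 - \<theta>) * a \<le> (1 - \<theta>) * b" using th ab by (simp add: mult_left_mono)
    then show ?thesis by (simp add: u_def algebra_simps)
  qed
  have "p = \<beta> u"
  proof (subst vec_eq_iff, rule allI)
    fix i
    obtain A B where AB: "\<And>w. real k / real CARD('n) \<le> w \<and> w \<le> real (Suc k) / real CARD('n) \<Longrightarrow> \<beta> w $ i = A + B * w"
      using piece_affine[of k i] by blast
    have "\<beta> a $ i = A + B * a" "\<beta> b $ i = A + B * b" "\<beta> u $ i = A + B * u"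
      using AB ab ua ub by auto
    moreover have "p $ i = (1 - \<theta>) * \<beta> a $ i + \<theta> * \<beta> b $ i" using th(3) by simp
    ultimately show "p $ i = \<beta> u $ i" by (simp add: u_def algebra_simps)
  qed
  then show "p \<in> \<beta> ` {a..b}" using ua ub by auto
qed

lemma chain:
  assumes V: "\<And>u. a \<le> u \<Longrightarrow> u \<le> b \<Longrightarrow> \<beta> u \<in> V" and a: "0 \<le> a" and ab: "a \<le> b" and b: "b \<le> real k / real CARD('n)"
  shows "(\<beta> a, \<beta> b) \<in> (segrel V)\<^sup>*"
  using V a ab b
proof (induction k arbitrary: a b)
  case 0
  then have "a = b" by simp
  then show ?case by simp
next
  case (Suc k)
  have single: "(\<beta> x, \<beta> y) \<in> segrel V" if "real k / real CARD('n) \<le> x" "x \<le> y" "y \<le> real (Suc k) / real CARD('n)"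
     "\<And>u. x \<le> u \<Longrightarrow> u \<le> y \<Longrightarrow> \<beta> u \<in> V" for x y
  proof -
    have "closed_segment (\<beta> x) (\<beta> y) \<subseteq> V" using piece_seg[OF that(1-3)] that(4) by auto
    then show ?thesis using beta_mono[OF that(2)] by (auto simp: segrel_def)
  qed
  show ?case
  proof (cases "b \<le> real k / real CARD('n)")
    case True
    then show ?thesis using Suc by blast
  next
    case False
    show ?thesis
    proof (cases "real k / real CARD('n) \<le> a")
      case True
      then show ?thesis using single[of a b] Suc.prems False by auto
    next
      case F2: False
      have "(\<beta> a, \<beta> (real k / real CARD('n))) \<in> (segrel V)\<^sup>*"
        using Suc.IH[of a "real k / real CARD('n)"] Suc.prems F2 False by auto
      moreover have "(\<beta> (real k / real CARD('n)), \<beta> b) \<in> segrel V"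
        using single[of "real k / real CARD('n)" b] Suc.prems False F2 by auto
      ultimately show ?thesis by auto
    qed
  qed
qed

lemma beta_dipath: "dipath \<beta>"
  unfolding dipath_def cube_circ_eq stream_map_def
proof (intro conjI allI impI)
  show "continuous_map dint_top cube_top \<beta>"
    unfolding dint_top_def cube_top_def continuous_map_subtopology_eu
    using beta_cont beta_cube by auto
next
  fix V s t
  assume V: "openin cube_top V" and d: "dint_circ (\<beta> -` V \<inter> topspace dint_top) s t"
  have st: "s \<le> t" "{s..t} \<subseteq> \<beta> -` V \<inter> {0..1}" using d by (auto simp: dint_circ_def dint_top_def)
  then have s0: "0 \<le> s" "t \<le> 1" by auto
  have "(\<beta> s, \<beta> t) \<in> (segrel V)\<^sup>*"
    by (rule chain[where k = "CARD('n)"]) (use st s0 in auto)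
  moreover have "\<beta> s \<in> V" using st by auto
  ultimately show "CS V (\<beta> s) (\<beta> t)" using V by (simp add: CS_def)
qed

end



lemma alpha_props:
  fixes \<alpha> :: "real \<Rightarrow> real^'n"
  assumes "dipath \<alpha>"
  shows "\<And>t. t \<in> {0..1} \<Longrightarrow> \<alpha> t \<in> unit_cube"
    and "\<And>s t i. 0 \<le> s \<Longrightarrow> s \<le> t \<Longrightarrow> t \<le> 1 \<Longrightarrow> \<alpha> s $ i \<le> \<alpha> t $ i"
proof -
  have sm: "stream_map dint_top dint_circ cube_top CS \<alpha>" using assms by (simp add: dipath_def cube_circ_eq)
  then have cm: "continuous_map dint_top cube_top \<alpha>" by (simp add: stream_map_def)
  then show img: "\<And>t. t \<in> {0..1} \<Longrightarrow> \<alpha> t \<in> unit_cube"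
    unfolding dint_top_def cube_top_def continuous_map_subtopology_eu by auto
  have all: "\<forall>V x y. openin cube_top V \<longrightarrow> dint_circ (\<alpha> -` V \<inter> topspace dint_top) x y \<longrightarrow> CS V (\<alpha> x) (\<alpha> y)"
    using sm by (simp add: stream_map_def)
  fix s t :: real and i assume st: "0 \<le> s" "s \<le> t" "t \<le> 1"
  have pre: "\<alpha> -` unit_cube \<inter> topspace dint_top = {0..1}" using img by (auto simp: dint_top_def)
  have oc: "openin cube_top unit_cube" using openin_topspace[of cube_top] by (simp add: topspace_cube)
  have "dint_circ {0..1} s t" using st by (simp add: dint_circ_def dint_top_def)
  then have "CS unit_cube (\<alpha> s) (\<alpha> t)" using all oc pre by metis
  then show "\<alpha> s $ i \<le> \<alpha> t $ i" unfolding CS_def using rtr_le by blast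
qed

theorem mainTheorem7:
  fixes \<alpha> :: "real \<Rightarrow> real^'n"
  assumes "dipath \<alpha>"
  shows "\<exists>\<beta> :: real \<Rightarrow> real^'n. dipath \<beta> \<and> \<beta> 0 = vtx (\<alpha> 0) \<and> \<beta> 1 = vtx (\<alpha> 1) \<and>
           cellular_path \<beta> \<and>
           ((\<alpha> 0 \<in> cube_boundary \<and> \<alpha> 1 \<in> cube_boundary \<and> \<alpha> (1/2) \<in> cube_interior)
              \<longrightarrow> (\<exists>s\<in>{0..1}. \<exists>t\<in>{0..1}. \<beta> s \<noteq> \<beta> t))"
proof -
  note img = alpha_props(1)[OF assms] and mono = alpha_props(2)[OF assms]
  define v0 where "v0 = vtx (\<alpha> 0)"
  define v1 where "v1 = vtx (\<alpha> 1)"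
  have v0v: "v0 \<in> cube_vertices" and v1v: "v1 \<in> cube_vertices"
    by (auto simp: v0_def v1_def vtx_def cube_vertices_def)
  have a1c: "\<alpha> 1 \<in> unit_cube" using img by auto
  have vle: "v0$i \<le> v1$i" for i
  proof -
    have "\<alpha> 0 $ i \<le> \<alpha> 1 $ i" using mono[of 0 1 i] by simp
    moreover have "\<alpha> 1 $ i \<le> 1" using a1c by (auto simp: unit_cube_def)
    ultimately show ?thesis by (auto simp: v0_def v1_def vtx_def)
  qed
  obtain e :: "'n \<Rightarrow> nat" where e: "bij_betw e UNIV {0..<card (UNIV :: 'n set)}"
    using ex_bij_betw_finite_nat[of "UNIV :: 'n set"] by auto
  have einj: "inj e" and erng: "\<And>i. e i < CARD('n)" using e by (auto simp: bij_betw_def)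
  interpret bsetup e v0 v1 using einj erng v0v v1v vle by unfold_locales auto
  have cell: "cellular_path (bpath e v0 v1)"
    unfolding cellular_path_def using beta0 beta1 v0v v1v beta_skel by auto
  have nc: "\<exists>s\<in>{0..1}. \<exists>t\<in>{0..1}. bpath e v0 v1 s \<noteq> bpath e v0 v1 t"
    if h: "\<alpha> 0 \<in> cube_boundary \<and> \<alpha> 1 \<in> cube_boundary \<and> \<alpha> (1/2) \<in> cube_interior"
  proof -
    have int: "0 < \<alpha> (1/2) $ i \<and> \<alpha> (1/2) $ i < 1" for i using h by (auto simp: cube_interior_def)
    have "\<alpha> 0 $ i \<le> \<alpha> (1/2) $ i" for i using mono[of 0 "1/2" i] by simp
    then have "\<alpha> 0 $ i < 1" for i using int[of i] by (meson le_less_trans)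
    then have "\<forall>i. \<alpha> 0 $ i \<noteq> 1" by (metis less_irrefl)
    then have z: "v0 = 0" by (simp add: v0_def vtx_def vec_eq_iff)
    obtain j where j: "\<alpha> 1 $ j = 0 \<or> \<alpha> 1 $ j = 1" using h by (auto simp: cube_boundary_def)
    have "\<alpha> (1/2) $ j \<le> \<alpha> 1 $ j" using mono[of "1/2" 1 j] by simp
    then have "\<alpha> 1 $ j = 1" using j int[of j] by auto
    then have "v1 $ j = 1" by (simp add: v1_def vtx_def)
    then have "v0 \<noteq> v1" using z by auto
    then show ?thesis using beta0 beta1 by (metis atLeastAtMost_iff order_refl zero_le_one)
  qed
  show ?thesis
    using beta_dipath beta0 beta1 cell nc unfolding v0_def v1_def by blast
qed


end
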